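(* Let $X\in\mathbb{R}^{n\times p}$ be a fixed (deterministic) matrix with $\frac1n\sum_{i=1}^n X_{ij}^2\le M^2$ for all $j=1,\dots,p$, for some $M>0$. Let $\delta>0$, let $W\in\mathbb{R}^{n\times p}$ have i.i.d. entries $W_{ik}\sim\mathcal N(0,\delta^2)$, and set $X^{(\delta)}=X+W$, \[ \Sigma=\tfrac1n X^\top X,\qquad \widetilde\Sigma^{(\delta)}=\tfrac1n (X^{(\delta)})^\top X^{(\delta)}-\delta^2 I_p . \] Let $S\subset\{1,\dots,p\}$ be a nonempty proper subset with $\Sigma_{SS}$ invertible and $\|\Sigma_{S^cS}\Sigma_{SS}^{-1}\|_\infty\le 1-\eta$ for some $\eta\in(0,1)$. Let $\varepsilon_0>0$ be such that for every matrix $\Delta\in\mathbb{R}^{p\times p}$ with $\|\Delta\|_\infty\le\varepsilon_0$, the matrix $(\Sigma+\Delta)_{SS}$ is invertible and $\|(\Sigma+\Delta)_{S^cS}((\Sigma+\Delta)_{SS})^{-1}\|_\infty\le 1-\eta/2$. Then there is an absolute constant $C_t>0$ such that the following holds. Let $\alpha\in(0,1)$ and define \[ L=\log\frac{4p^2}{\alpha},\quad t_1=2M\sqrt{\frac{2\delta^2L}{n}},\quad t_2=C_t\,\delta^2\Big(\sqrt{\frac Ln}+\frac Ln\Big),\quad \varepsilon=p(t_1+t_2). \] If $\varepsilon\le\varepsilon_0$, then \[ \mathbb P\Big(\big\|\widetilde\Sigma^{(\delta)}_{S^cS}(\widetilde\Sigma^{(\delta)}_{SS})^{-1}\big\|_\infty\le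 1-\frac\eta2\Big)\ge 1-\alpha, \] where the event includes invertibility of $\widetilde\Sigma^{(\delta)}_{SS}$.
   Context: For a matrix $A$, $\|A\|_\infty$ denotes the induced $\ell_\infty$ operator norm, i.e. the maximum absolute row sum $\max_i\sum_j|A_{ij}|$. For index sets $I,J$, $A_{IJ}$ denotes the submatrix of $A$ with rows indexed by $I$ and columns indexed by $J$; $S^c$ is the complement of $S$ in $\{1,\dots,p\}$. The probability is over $W$. *)

theory Defs
  imports "HOL-Probability.Probability"
begin

text \<open>Matrices are functions nat => nat => real; only the entries with indices in the
  relevant index sets matter. Indices are 0-based: rows {..<n}, columns {..<p}.\<close>

definition inf_norm :: "nat set \<Rightarrow> nat set \<Rightarrow> (nat \<Rightarrow> nat \<Rightarrow> real) \<Rightarrow> real" where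
  "inf_norm I J A = (if I = {} then 0 else Max ((\<lambda>i. \<Sum>j\<in>J. \<bar>A i j\<bar>) ` I))"

definition mat_mult :: "nat set \<Rightarrow> (nat \<Rightarrow> nat \<Rightarrow> real) \<Rightarrow> (nat \<Rightarrow> nat \<Rightarrow> real) \<Rightarrow> (nat \<Rightarrow> nat \<Rightarrow> real)" where
  "mat_mult K A B = (\<lambda>i j. \<Sum>k\<in>K. A i k * B k j)"

definition is_sub_inverse :: "nat set \<Rightarrow> (nat \<Rightarrow> nat \<Rightarrow> real) \<Rightarrow> (nat \<Rightarrow> nat \<Rightarrow> real) \<Rightarrow> bool" where
  "is_sub_inverse S A B \<longleftrightarrow>
     (\<forall>i\<in>S. \<forall>j\<in>S. mat_mult S A B i j = (if i = j then 1 else 0)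
                    \<and> mat_mult S B A i j = (if i = j then 1 else 0))"

definition sub_invertible :: "nat set \<Rightarrow> (nat \<Rightarrow> nat \<Rightarrow> real) \<Rightarrow> bool" where
  "sub_invertible S A \<longleftrightarrow> (\<exists>B. is_sub_inverse S A B)"

definition sub_inv :: "nat set \<Rightarrow> (nat \<Rightarrow> nat \<Rightarrow> real) \<Rightarrow> (nat \<Rightarrow> nat \<Rightarrow> real)" where
  "sub_inv S A = (SOME B. is_sub_inverse S A B)"

definition irrep :: "nat \<Rightarrow> nat set \<Rightarrow> (nat \<Rightarrow> nat \<Rightarrow> real) \<Rightarrow> real" where
  "irrep p S A = inf_norm ({..<p} - S) S (mat_mult S A (sub_inv S A))"

definition gram :: "nat \<Rightarrow> (nat \<Rightarrow> nat \<Rightarrow> real) \<Rightarrow> (nat \<Rightarrow> nat \<Rightarrow> real)" where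
  "gram n X = (\<lambda>j k. (1 / real n) * (\<Sum>i<n. X i j * X i k))"

definition noisy_gram :: "nat \<Rightarrow> real \<Rightarrow> (nat \<Rightarrow> nat \<Rightarrow> real) \<Rightarrow> (nat \<times> nat \<Rightarrow> real) \<Rightarrow> (nat \<Rightarrow> nat \<Rightarrow> real)" where
  "noisy_gram n \<delta> X W = (\<lambda>j k. (1 / real n) * (\<Sum>i<n. (X i j + W (i, j)) * (X i k + W (i, k)))
                                 - (if j = k then \<delta>\<^sup>2 else 0))"

definition noise_measure :: "nat \<Rightarrow> nat \<Rightarrow> real \<Rightarrow> (nat \<times> nat \<Rightarrow> real) measure" where
  "noise_measure n p \<delta> = PiM ({..<n} \<times> {..<p}) (\<lambda>_. density lborel (normal_density 0 \<delta>))"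

end

theory Submission
  imports Defs "Jordan_Normal_Form.Determinant"
begin


lemma nd_int1:
  assumes "\<sigma> > 0"
  shows "(\<integral>\<^sup>+x. ennreal (normal_density \<mu> \<sigma> x) \<partial>lborel) = 1"
  using integrable_normal_density[OF assms] integral_normal_density[OF assms]
  by (subst nn_integral_eq_integral) auto

lemma mgf_lin:
  fixes \<delta> a :: real
  assumes "\<delta> > 0"
  shows "(\<integral>\<^sup>+y. ennreal (exp (a*y)) \<partial>density lborel (normal_density 0 \<delta>)) = ennreal (exp (a\<^sup>2*\<delta>\<^sup>2/2))"
proof -
  have eq: "normal_density 0 \<delta> x * exp (a*x) = exp (a\<^sup>2*\<delta>\<^sup>2/2) * normal_density (a*\<delta>\<^sup>2) \<delta> x" for x
  proof -
    have "-(x - 0)\<^sup>2/(2*\<delta>\<^sup>2) + a*x = a\<^sup>2*\<delta>\<^sup>2/2 + (-(x - a*\<delta>\<^sup>2)\<^sup>2/(2*\<delta>\<^sup>2))"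
      using assms by (simp add: field_simps power2_eq_square)
    then have "exp (-(x - 0)\<^sup>2/(2*\<delta>\<^sup>2)) * exp (a*x) = exp (a\<^sup>2*\<delta>\<^sup>2/2) * exp (-(x - a*\<delta>\<^sup>2)\<^sup>2/(2*\<delta>\<^sup>2))"
      by (metis exp_add)
    then show ?thesis unfolding normal_density_def by (simp add: algebra_simps)
  qed
  have "(\<integral>\<^sup>+y. ennreal (exp (a*y)) \<partial>density lborel (normal_density 0 \<delta>))
      = (\<integral>\<^sup>+y. ennreal (normal_density 0 \<delta> y) * ennreal (exp (a*y)) \<partial>lborel)"
    by (subst nn_integral_density) auto
  also have "\<dots> = (\<integral>\<^sup>+y. ennreal (exp (a\<^sup>2*\<delta>\<^sup>2/2)) * ennreal (normal_density (a*\<delta>\<^sup>2) \<delta> y) \<partial>lborel)"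
    by (intro nn_integral_cong) (simp add: eq[symmetric] ennreal_mult[symmetric])
  also have "\<dots> = ennreal (exp (a\<^sup>2*\<delta>\<^sup>2/2))"
    by (subst nn_integral_cmult) (auto simp: nd_int1 assms)
  finally show ?thesis .
qed

lemma mgf_sq:
  fixes \<delta> s :: real
  assumes "\<delta> > 0" "2 * s * \<delta>\<^sup>2 < 1"
  shows "(\<integral>\<^sup>+y. ennreal (exp (s*y\<^sup>2)) \<partial>density lborel (normal_density 0 \<delta>)) = ennreal (1 / sqrt (1 - 2 * s * \<delta>\<^sup>2))"
proof -
  define q where "q = 1 - 2 * s * \<delta>\<^sup>2"
  have q: "q > 0" using assms by (simp add: q_def)
  define \<sigma> where "\<sigma> = \<delta> / sqrt q"
  have \<sigma>: "\<sigma> > 0" using q assms by (simp add: \<sigma>_def)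
  have s2: "\<sigma>\<^sup>2 = \<delta>\<^sup>2 / q" using q by (simp add: \<sigma>_def power_divide)
  have eq: "normal_density 0 \<delta> x * exp (s*x\<^sup>2) = (1 / sqrt q) * normal_density 0 \<sigma> x" for x
  proof -
    have e1: "-(x - 0)\<^sup>2/(2*\<delta>\<^sup>2) + s*x\<^sup>2 = -(x - 0)\<^sup>2/(2*\<sigma>\<^sup>2)"
      using assms q unfolding s2 q_def by (simp add: field_simps)
    have e2: "1 / sqrt (2*pi*\<delta>\<^sup>2) = (1 / sqrt q) * (1 / sqrt (2*pi*\<sigma>\<^sup>2))"
      using q assms unfolding s2 by (simp add: real_sqrt_divide real_sqrt_mult field_simps)
    have "normal_density 0 \<delta> x * exp (s*x\<^sup>2) = 1 / sqrt (2*pi*\<delta>\<^sup>2) * (exp (-(x - 0)\<^sup>2/(2*\<delta>\<^sup>2)) * exp (s*x\<^sup>2))"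
      unfolding normal_density_def by simp
    also have "\<dots> = 1 / sqrt (2*pi*\<delta>\<^sup>2) * exp (-(x - 0)\<^sup>2/(2*\<sigma>\<^sup>2))"
      by (simp only: exp_add[symmetric] e1)
    also have "\<dots> = (1 / sqrt q) * normal_density 0 \<sigma> x"
      unfolding normal_density_def e2 by simp
    finally show ?thesis .
  qed
  have "(\<integral>\<^sup>+y. ennreal (exp (s*y\<^sup>2)) \<partial>density lborel (normal_density 0 \<delta>))
      = (\<integral>\<^sup>+y. ennreal (normal_density 0 \<delta> y) * ennreal (exp (s*y\<^sup>2)) \<partial>lborel)"
    by (subst nn_integral_density) auto
  also have "\<dots> = (\<integral>\<^sup>+y. ennreal (1 / sqrt q) * ennreal (normal_density 0 \<sigma> y) \<partial>lborel)"
  proof (intro nn_integral_cong)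
    fix x
    have "ennreal (normal_density 0 \<delta> x) * ennreal (exp (s*x\<^sup>2)) = ennreal (normal_density 0 \<delta> x * exp (s*x\<^sup>2))"
      by (simp add: ennreal_mult)
    also have "\<dots> = ennreal ((1 / sqrt q) * normal_density 0 \<sigma> x)" by (simp only: eq)
    also have "\<dots> = ennreal (1 / sqrt q) * ennreal (normal_density 0 \<sigma> x)"
      by (rule ennreal_mult) (use q in auto)
    finally show "ennreal (normal_density 0 \<delta> x) * ennreal (exp (s*x\<^sup>2)) = ennreal (1 / sqrt q) * ennreal (normal_density 0 \<sigma> x)" .
  qed
  also have "\<dots> = ennreal (1 / sqrt q)"
    by (subst nn_integral_cmult) (auto simp: nd_int1 assms \<sigma>)
  finally show ?thesis by (simp add: q_def)
qed


lemma prod_col: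
  fixes g :: "nat \<Rightarrow> 'a::comm_monoid_mult"
  assumes "finite K" "\<And>i. i < n \<Longrightarrow> (i,k) \<in> K"
  shows "(\<Prod>q\<in>K. if q \<in> {..<n}\<times>{k} then g (fst q) else 1) = (\<Prod>i<n. g i)"
proof -
  have e: "{..<n}\<times>{k} = (\<lambda>i. (i,k)) ` {..<n}" by blast
  have "(\<Prod>q\<in>K. if q \<in> {..<n}\<times>{k} then g (fst q) else 1) = (\<Prod>q\<in>{..<n}\<times>{k}. if q \<in> {..<n}\<times>{k} then g (fst q) else 1)"
    using assms by (intro prod.mono_neutral_right) auto
  also have "\<dots> = (\<Prod>q\<in>{..<n}\<times>{k}. g (fst q))" by (intro prod.cong) auto
  also have "\<dots> = (\<Prod>q\<in>(\<lambda>i. (i,k)) ` {..<n}. g (fst q))"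
    by (simp only: e)
  also have "\<dots> = (\<Prod>i<n. g i)"
    by (subst prod.reindex) (auto simp: inj_on_def)
  finally show ?thesis .
qed

lemma pps_N:
  assumes "\<delta> > 0"
  shows "product_prob_space (\<lambda>_::'i. density lborel (normal_density 0 \<delta>))"
proof -
  interpret prob_space "density lborel (normal_density 0 \<delta>)"
    by (rule prob_space_normal_density[OF assms(1)])
  show ?thesis
    unfolding product_prob_space_def product_prob_space_axioms_def product_sigma_finite_def
    using prob_space_normal_density[OF assms] by (simp add: prob_space_imp_sigma_finite)
qed

lemma N_UNIV:
  assumes "\<delta> > 0"
  shows "emeasure (density lborel (normal_density 0 \<delta>)) UNIV = 1"
  using prob_space.emeasure_space_1[OF prob_space_normal_density[OF assms]] by simp

lemma lin_mgf:
  fixes \<delta> l :: real and c :: "nat \<Rightarrow> real"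
  assumes "\<delta> > 0" "finite K" "\<And>i. i < n \<Longrightarrow> (i,k) \<in> K"
  shows "(\<integral>\<^sup>+W. ennreal (exp (l * (\<Sum>i<n. c i * W (i,k)))) \<partial>PiM K (\<lambda>_. density lborel (normal_density 0 \<delta>)))
         = ennreal (exp (l\<^sup>2 * \<delta>\<^sup>2 * (\<Sum>i<n. (c i)\<^sup>2) / 2))"
proof -
  let ?N = "density lborel (normal_density 0 \<delta>)"
  define f where "f q y = (if q \<in> {..<n}\<times>{k} then ennreal (exp (l * c (fst q) * y)) else 1)" for q y
  have 1: "ennreal (exp (l * (\<Sum>i<n. c i * W (i,k)))) = (\<Prod>q\<in>K. f q (W q))" for W
  proof -
    have "(\<Prod>q\<in>K. f q (W q)) = (\<Prod>q\<in>K. if q \<in> {..<n}\<times>{k} then ennreal (exp (l * c (fst q) * W (fst q, k))) else 1)"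
      unfolding f_def by (intro prod.cong) auto
    also have "\<dots> = (\<Prod>i<n. ennreal (exp (l * c i * W (i, k))))"
      by (rule prod_col[OF assms(2,3)])
    also have "\<dots> = ennreal (\<Prod>i<n. exp (l * c i * W (i, k)))"
      by (rule prod_ennreal) auto
    also have "(\<Prod>i<n. exp (l * c i * W (i, k))) = exp (l * (\<Sum>i<n. c i * W (i,k)))"
      by (simp add: exp_sum[symmetric] sum_distrib_left mult.assoc)
    finally show ?thesis by simp
  qed
  have "(\<integral>\<^sup>+W. ennreal (exp (l * (\<Sum>i<n. c i * W (i,k)))) \<partial>PiM K (\<lambda>_. ?N))
      = (\<integral>\<^sup>+W. (\<Prod>q\<in>K. f q (W q)) \<partial>PiM K (\<lambda>_. ?N))"
    by (simp only: 1)
  also have "\<dots> = (\<Prod>q\<in>K. integral\<^sup>N ?N (f q))"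
  proof (rule product_sigma_finite.product_nn_integral_prod[OF product_prob_space.axioms(1)[OF pps_N[OF assms(1)]]])
    show "finite K" by (rule assms)
    fix q assume "q \<in> K"
    show "f q \<in> borel_measurable ?N"
      unfolding f_def by (cases "q \<in> {..<n}\<times>{k}") simp_all
  qed
  also have "\<dots> = (\<Prod>q\<in>K. if q \<in> {..<n}\<times>{k} then ennreal (exp ((l * c (fst q))\<^sup>2 * \<delta>\<^sup>2 / 2)) else 1)"
  proof (intro prod.cong refl)
    fix q assume "q \<in> K"
    show "integral\<^sup>N ?N (f q) = (if q \<in> {..<n}\<times>{k} then ennreal (exp ((l * c (fst q))\<^sup>2 * \<delta>\<^sup>2 / 2)) else 1)"
    proof (cases "q \<in> {..<n}\<times>{k}")
      case True
      then show ?thesis unfolding f_def using mgf_lin[OF assms(1), of "l * c (fst q)"] by simp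
    next
      case False
      then show ?thesis unfolding f_def by (simp add: N_UNIV[OF assms(1)])
    qed
  qed
  also have "\<dots> = (\<Prod>i<n. ennreal (exp ((l * c i)\<^sup>2 * \<delta>\<^sup>2 / 2)))"
    by (rule prod_col[OF assms(2,3)])
  also have "\<dots> = ennreal (\<Prod>i<n. exp ((l * c i)\<^sup>2 * \<delta>\<^sup>2 / 2))"
    by (rule prod_ennreal) auto
  also have "(\<Prod>i<n. exp ((l * c i)\<^sup>2 * \<delta>\<^sup>2 / 2)) = exp (l\<^sup>2 * \<delta>\<^sup>2 * (\<Sum>i<n. (c i)\<^sup>2) / 2)"
    by (simp add: exp_sum[symmetric] sum_distrib_left sum_divide_distrib power_mult_distrib algebra_simps)
  finally show ?thesis .
qed

lemma sq_mgf:
  fixes \<delta> s :: real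
  assumes "\<delta> > 0" "2 * s * \<delta>\<^sup>2 < 1" "finite K" "\<And>i. i < n \<Longrightarrow> (i,k) \<in> K"
  shows "(\<integral>\<^sup>+W. ennreal (exp (s * (\<Sum>i<n. (W (i,k))\<^sup>2))) \<partial>PiM K (\<lambda>_. density lborel (normal_density 0 \<delta>)))
         = ennreal ((1 / sqrt (1 - 2 * s * \<delta>\<^sup>2)) ^ n)"
proof -
  let ?N = "density lborel (normal_density 0 \<delta>)"
  define f where "f q y = (if q \<in> {..<n}\<times>{k} then ennreal (exp (s * y\<^sup>2)) else 1)" for q y
  have 1: "ennreal (exp (s * (\<Sum>i<n. (W (i,k))\<^sup>2))) = (\<Prod>q\<in>K. f q (W q))" for W
  proof -
    have "(\<Prod>q\<in>K. f q (W q)) = (\<Prod>q\<in>K. if q \<in> {..<n}\<times>{k} then ennreal (exp (s * (W (fst q, k))\<^sup>2)) else 1)"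
      unfolding f_def by (intro prod.cong) auto
    also have "\<dots> = (\<Prod>i<n. ennreal (exp (s * (W (i, k))\<^sup>2)))"
      by (rule prod_col[OF assms(3,4)])
    also have "\<dots> = ennreal (\<Prod>i<n. exp (s * (W (i, k))\<^sup>2))"
      by (rule prod_ennreal) auto
    also have "(\<Prod>i<n. exp (s * (W (i, k))\<^sup>2)) = exp (s * (\<Sum>i<n. (W (i,k))\<^sup>2))"
      by (simp add: exp_sum[symmetric] sum_distrib_left)
    finally show ?thesis by simp
  qed
  have "(\<integral>\<^sup>+W. ennreal (exp (s * (\<Sum>i<n. (W (i,k))\<^sup>2))) \<partial>PiM K (\<lambda>_. ?N))
      = (\<integral>\<^sup>+W. (\<Prod>q\<in>K. f q (W q)) \<partial>PiM K (\<lambda>_. ?N))"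
    by (simp only: 1)
  also have "\<dots> = (\<Prod>q\<in>K. integral\<^sup>N ?N (f q))"
  proof (rule product_sigma_finite.product_nn_integral_prod[OF product_prob_space.axioms(1)[OF pps_N[OF assms(1)]]])
    show "finite K" by (rule assms)
    fix q assume "q \<in> K"
    show "f q \<in> borel_measurable ?N"
      unfolding f_def by (cases "q \<in> {..<n}\<times>{k}") simp_all
  qed
  also have "\<dots> = (\<Prod>q\<in>K. if q \<in> {..<n}\<times>{k} then ennreal (1 / sqrt (1 - 2 * s * \<delta>\<^sup>2)) else 1)"
  proof (intro prod.cong refl)
    fix q assume "q \<in> K"
    show "integral\<^sup>N ?N (f q) = (if q \<in> {..<n}\<times>{k} then ennreal (1 / sqrt (1 - 2 * s * \<delta>\<^sup>2)) else 1)"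
    proof (cases "q \<in> {..<n}\<times>{k}")
      case True
      then show ?thesis unfolding f_def using mgf_sq[OF assms(1,2)] by simp
    next
      case False
      then show ?thesis unfolding f_def by (simp add: N_UNIV[OF assms(1)])
    qed
  qed
  also have "\<dots> = (\<Prod>i<n. ennreal (1 / sqrt (1 - 2 * s * \<delta>\<^sup>2)))"
    by (rule prod_col[OF assms(3,4)])
  also have "\<dots> = ennreal ((1 / sqrt (1 - 2 * s * \<delta>\<^sup>2)) ^ n)"
    by (subst prod_ennreal) (use assms(2) in auto)
  finally show ?thesis .
qed


lemma fin_I[simp]: "finite ({..<n::nat}\<times>{..<p::nat})"
  by (intro finite_cartesian_product) auto

lemma meas_comp:
  assumes "q \<in> K"
  shows "(\<lambda>W. W q) \<in> borel_measurable (PiM K (\<lambda>_. density lborel (normal_density 0 \<delta>)))"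
proof -
  have "(\<lambda>W. W q) \<in> measurable (PiM K (\<lambda>_. density lborel (normal_density 0 \<delta>))) (density lborel (normal_density 0 \<delta>))"
    by (rule measurable_component_singleton) fact
  then show ?thesis by (simp add: measurable_cong_sets[OF refl sets_density])
qed

lemma cross_meas:
  fixes n p j k :: nat
  assumes "j < p" "k < p"
  shows "(\<lambda>W. (\<Sum>i<n. W (i,j) * W (i,k))) \<in> borel_measurable (PiM ({..<n}\<times>{..<p}) (\<lambda>_. density lborel (normal_density 0 \<delta>)))"
  by (intro borel_measurable_sum borel_measurable_times meas_comp) (use assms in auto)

lemma lin_meas:
  fixes n p k :: nat
  assumes "k < p"
  shows "(\<lambda>W. (\<Sum>i<n. c i * W (i,k))) \<in> borel_measurable (PiM ({..<n}\<times>{..<p}) (\<lambda>_. density lborel (normal_density 0 \<delta>)))"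
  by (intro borel_measurable_sum borel_measurable_times meas_comp borel_measurable_const) (use assms in auto)

lemma cross_mgf:
  fixes \<delta> l :: real and n p j k :: nat
  assumes "\<delta> > 0" "j \<noteq> k" "j < p" "k < p" "l\<^sup>2 * \<delta>^4 < 1"
  shows "(\<integral>\<^sup>+W. ennreal (exp (l * (\<Sum>i<n. W (i,j) * W (i,k)))) \<partial>PiM ({..<n}\<times>{..<p}) (\<lambda>_. density lborel (normal_density 0 \<delta>)))
         = ennreal ((1 / sqrt (1 - l\<^sup>2 * \<delta>^4)) ^ n)"
proof -
  let ?N = "density lborel (normal_density 0 \<delta>)"
  define I where "I = {..<n}\<times>{..<p}"
  define J where "J = {..<n}\<times>{j}"
  define I1 where "I1 = I - J"
  have U: "I1 \<union> J = I" using assms unfolding I1_def J_def I_def by auto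
  have D: "I1 \<inter> J = {}" unfolding I1_def by auto
  have fin: "finite I1" "finite J" unfolding I1_def J_def I_def by auto
  have PS: "product_sigma_finite (\<lambda>_::nat\<times>nat. ?N)"
    by (rule product_prob_space.axioms(1)[OF pps_N[OF assms(1)]])
  have meas: "(\<lambda>W. ennreal (exp (l * (\<Sum>i<n. W (i,j) * W (i,k))))) \<in> borel_measurable (PiM (I1 \<union> J) (\<lambda>_. ?N))"
    unfolding U I_def using cross_meas[OF assms(3,4), of n \<delta>] by measurable
  have "(\<integral>\<^sup>+W. ennreal (exp (l * (\<Sum>i<n. W (i,j) * W (i,k)))) \<partial>PiM I (\<lambda>_. ?N))
      = (\<integral>\<^sup>+W. ennreal (exp (l * (\<Sum>i<n. W (i,j) * W (i,k)))) \<partial>PiM (I1 \<union> J) (\<lambda>_. ?N))"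
    by (simp only: U)
  also have "\<dots> = (\<integral>\<^sup>+x. (\<integral>\<^sup>+y. ennreal (exp (l * (\<Sum>i<n. merge I1 J (x,y) (i,j) * merge I1 J (x,y) (i,k)))) \<partial>PiM J (\<lambda>_. ?N)) \<partial>PiM I1 (\<lambda>_. ?N))"
    by (rule product_sigma_finite.product_nn_integral_fold[OF PS D fin meas])
  also have "\<dots> = (\<integral>\<^sup>+x. (\<integral>\<^sup>+y. ennreal (exp (l * (\<Sum>i<n. x (i,k) * y (i,j)))) \<partial>PiM J (\<lambda>_. ?N)) \<partial>PiM I1 (\<lambda>_. ?N))"
  proof (intro nn_integral_cong)
    fix x y :: "nat\<times>nat \<Rightarrow> real"
    have "(\<Sum>i<n. merge I1 J (x,y) (i,j) * merge I1 J (x,y) (i,k)) = (\<Sum>i<n. x (i,k) * y (i,j))"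
      by (intro sum.cong) (use assms in \<open>auto simp: merge_def I1_def J_def I_def\<close>)
    then show "ennreal (exp (l * (\<Sum>i<n. merge I1 J (x,y) (i,j) * merge I1 J (x,y) (i,k)))) = ennreal (exp (l * (\<Sum>i<n. x (i,k) * y (i,j))))"
      by simp
  qed
  also have "\<dots> = (\<integral>\<^sup>+x. ennreal (exp ((l\<^sup>2 * \<delta>\<^sup>2 / 2) * (\<Sum>i<n. (x (i,k))\<^sup>2))) \<partial>PiM I1 (\<lambda>_. ?N))"
  proof (intro nn_integral_cong)
    fix x :: "nat\<times>nat \<Rightarrow> real"
    have "(\<integral>\<^sup>+y. ennreal (exp (l * (\<Sum>i<n. x (i,k) * y (i,j)))) \<partial>PiM J (\<lambda>_. ?N)) = ennreal (exp (l\<^sup>2 * \<delta>\<^sup>2 * (\<Sum>i<n. (x (i,k))\<^sup>2) / 2))"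
      by (rule lin_mgf[OF assms(1) fin(2)]) (auto simp: J_def)
    then show "(\<integral>\<^sup>+y. ennreal (exp (l * (\<Sum>i<n. x (i,k) * y (i,j)))) \<partial>PiM J (\<lambda>_. ?N)) = ennreal (exp ((l\<^sup>2 * \<delta>\<^sup>2 / 2) * (\<Sum>i<n. (x (i,k))\<^sup>2)))"
      by simp
  qed
  also have "\<dots> = ennreal ((1 / sqrt (1 - 2 * (l\<^sup>2 * \<delta>\<^sup>2 / 2) * \<delta>\<^sup>2)) ^ n)"
  proof (rule sq_mgf[OF assms(1) _ fin(1)])
    show "2 * (l\<^sup>2 * \<delta>\<^sup>2 / 2) * \<delta>\<^sup>2 < 1" using assms(5) by (simp add: power2_eq_square power4_eq_xxxx mult_ac)
    fix i assume "i < n" then show "(i,k) \<in> I1" using assms unfolding I1_def I_def J_def by auto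
  qed
  also have "2 * (l\<^sup>2 * \<delta>\<^sup>2 / 2) * \<delta>\<^sup>2 = l\<^sup>2 * \<delta>^4" by (simp add: power2_eq_square power4_eq_xxxx mult_ac)
  finally show ?thesis unfolding I_def .
qed

lemma diag_mgf:
  fixes \<delta> l :: real and n p j :: nat
  assumes "\<delta> > 0" "j < p" "2 * l * \<delta>\<^sup>2 < 1"
  shows "(\<integral>\<^sup>+W. ennreal (exp (l * ((\<Sum>i<n. W (i,j) * W (i,j)) - real n * \<delta>\<^sup>2))) \<partial>PiM ({..<n}\<times>{..<p}) (\<lambda>_. density lborel (normal_density 0 \<delta>)))
         = ennreal (exp (- l * real n * \<delta>\<^sup>2) * (1 / sqrt (1 - 2 * l * \<delta>\<^sup>2)) ^ n)"
proof -
  let ?N = "density lborel (normal_density 0 \<delta>)"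
  have e: "ennreal (exp (l * ((\<Sum>i<n. W (i,j) * W (i,j)) - real n * \<delta>\<^sup>2))) = ennreal (exp (- l * real n * \<delta>\<^sup>2)) * ennreal (exp (l * (\<Sum>i<n. (W (i,j))\<^sup>2)))" for W
    by (simp add: ennreal_mult[symmetric] exp_add[symmetric] power2_eq_square algebra_simps)
  have "(\<integral>\<^sup>+W. ennreal (exp (l * ((\<Sum>i<n. W (i,j) * W (i,j)) - real n * \<delta>\<^sup>2))) \<partial>PiM ({..<n}\<times>{..<p}) (\<lambda>_. ?N))
     = ennreal (exp (- l * real n * \<delta>\<^sup>2)) * (\<integral>\<^sup>+W. ennreal (exp (l * (\<Sum>i<n. (W (i,j))\<^sup>2))) \<partial>PiM ({..<n}\<times>{..<p}) (\<lambda>_. ?N))"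
    unfolding e
  proof (rule nn_integral_cmult)
    have "(\<lambda>W. (\<Sum>i<n. W (i,j) * W (i,j))) \<in> borel_measurable (PiM ({..<n}\<times>{..<p}) (\<lambda>_. ?N))"
      by (rule cross_meas) (use assms in auto)
    then show "(\<lambda>W. ennreal (exp (l * (\<Sum>i<n. (W (i,j))\<^sup>2)))) \<in> borel_measurable (PiM ({..<n}\<times>{..<p}) (\<lambda>_. ?N))"
      by (simp add: power2_eq_square)
  qed
  also have "\<dots> = ennreal (exp (- l * real n * \<delta>\<^sup>2)) * ennreal ((1 / sqrt (1 - 2 * l * \<delta>\<^sup>2)) ^ n)"
    by (subst sq_mgf[OF assms(1,3)]) (use assms in auto)
  also have "\<dots> = ennreal (exp (- l * real n * \<delta>\<^sup>2) * (1 / sqrt (1 - 2 * l * \<delta>\<^sup>2)) ^ n)"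
    by (rule ennreal_mult[symmetric]) (use assms in auto)
  finally show ?thesis .
qed


lemma ln_lower:
  fixes x :: real
  assumes "\<bar>x\<bar> \<le> 1/2"
  shows "- x - 2 * x\<^sup>2 \<le> ln (1 - x)"
proof (cases "x \<ge> 0")
  case True
  then show ?thesis using ln_one_minus_pos_lower_bound[of x] assms by auto
next
  case False
  then have "(-x) - (-x)\<^sup>2 \<le> ln (1 + (-x))" using assms by (intro ln_one_plus_pos_lower_bound) auto
  then have "-x - x*x \<le> ln (1 - x)" by (simp add: power2_eq_square)
  then show ?thesis using zero_le_square[of x] unfolding power2_eq_square by linarith
qed

lemma h2:
  fixes x :: real
  assumes "\<bar>x\<bar> \<le> 1/2"
  shows "1 / sqrt (1 - x) \<le> exp (x/2 + x\<^sup>2)"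
proof -
  have pos: "1 - x > 0" using assms by auto
  have "exp (- x - 2 * x\<^sup>2) \<le> 1 - x"
    using ln_lower[OF assms] pos by (simp add: ln_ge_iff)
  moreover have "(exp (- x/2 - x\<^sup>2))\<^sup>2 = exp (- x - 2 * x\<^sup>2)"
    by (simp add: power2_eq_square exp_add[symmetric])
  ultimately have "exp (- x/2 - x\<^sup>2) \<le> sqrt (1 - x)"
    by (intro real_le_rsqrt) simp
  then have "1 / sqrt (1 - x) \<le> 1 / exp (- x/2 - x\<^sup>2)"
    using pos by (intro divide_left_mono) auto
  also have "1 / exp (- x/2 - x\<^sup>2) = exp (x/2 + x\<^sup>2)"
  proof -
    have "exp (- x/2 - x\<^sup>2) * exp (x/2 + x\<^sup>2) = 1" by (simp flip: exp_add)
    then show ?thesis by (simp add: field_simps mult.commute)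
  qed
  finally show ?thesis .
qed

definition Qf :: "nat \<Rightarrow> real \<Rightarrow> nat \<Rightarrow> nat \<Rightarrow> (nat \<times> nat \<Rightarrow> real) \<Rightarrow> real" where
  "Qf n \<delta> j k W = (\<Sum>i<n. W (i,j) * W (i,k)) - (if j = k then real n * \<delta>\<^sup>2 else 0)"

lemma Q_meas:
  fixes n p j k :: nat
  assumes "j < p" "k < p"
  shows "Qf n \<delta> j k \<in> borel_measurable (PiM ({..<n}\<times>{..<p}) (\<lambda>_. density lborel (normal_density 0 \<delta>')))"
  unfolding Qf_def using cross_meas[OF assms, of n \<delta>'] by measurable

lemma Q_mgf:
  fixes \<delta> u :: real and n p j k :: nat
  assumes "\<delta> > 0" "j < p" "k < p" "\<bar>u\<bar> \<le> 1/4"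
  shows "(\<integral>\<^sup>+W. ennreal (exp ((u / \<delta>\<^sup>2) * Qf n \<delta> j k W)) \<partial>PiM ({..<n}\<times>{..<p}) (\<lambda>_. density lborel (normal_density 0 \<delta>)))
         \<le> ennreal (exp (4 * real n * u\<^sup>2))"
proof (cases "j = k")
  case False
  have l: "(u / \<delta>\<^sup>2)\<^sup>2 * \<delta>^4 = u\<^sup>2" using assms(1) by (simp add: power_divide power2_eq_square power4_eq_xxxx)
  have u2: "u\<^sup>2 \<le> 1/16"
  proof -
    have "u\<^sup>2 = \<bar>u\<bar> * \<bar>u\<bar>" by (simp add: power2_eq_square)
    also have "\<dots> \<le> (1/4) * (1/4)" using assms(4) by (intro mult_mono) auto
    finally show ?thesis by simp
  qed
  have "(\<integral>\<^sup>+W. ennreal (exp ((u / \<delta>\<^sup>2) * Qf n \<delta> j k W)) \<partial>PiM ({..<n}\<times>{..<p}) (\<lambda>_. density lborel (normal_density 0 \<delta>)))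
     = ennreal ((1 / sqrt (1 - u\<^sup>2)) ^ n)"
    unfolding Qf_def using False cross_mgf[OF assms(1) False assms(2,3), of "u / \<delta>\<^sup>2" n] l u2 by simp
  also have "\<dots> \<le> ennreal (exp (4 * real n * u\<^sup>2))"
  proof (rule ennreal_leI)
    have a: "1 / sqrt (1 - u\<^sup>2) \<le> exp (u\<^sup>2/2 + (u\<^sup>2)\<^sup>2)" using u2 by (intro h2) auto
    have "u\<^sup>2/2 + (u\<^sup>2)\<^sup>2 \<le> 4 * u\<^sup>2"
    proof -
      have "(u\<^sup>2)\<^sup>2 = u\<^sup>2 * u\<^sup>2" by (simp add: power2_eq_square)
      also have "\<dots> \<le> u\<^sup>2 * 1" using u2 by (intro mult_left_mono) auto
      finally have "(u\<^sup>2)\<^sup>2 \<le> u\<^sup>2" by simp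
      then show ?thesis using zero_le_power2[of u] by linarith
    qed
    then have "1 / sqrt (1 - u\<^sup>2) \<le> exp (4 * u\<^sup>2)" using a by (meson exp_le_cancel_iff order_trans)
    then have "(1 / sqrt (1 - u\<^sup>2)) ^ n \<le> (exp (4 * u\<^sup>2)) ^ n"
      using u2 by (intro power_mono) auto
    also have "\<dots> = exp (4 * real n * u\<^sup>2)" by (simp add: exp_of_nat_mult[symmetric] mult_ac)
    finally show "(1 / sqrt (1 - u\<^sup>2)) ^ n \<le> exp (4 * real n * u\<^sup>2)" .
  qed
  finally show ?thesis .
next
  case True
  have l: "2 * (u / \<delta>\<^sup>2) * \<delta>\<^sup>2 = 2 * u" using assms(1) by simp
  have "(\<integral>\<^sup>+W. ennreal (exp ((u / \<delta>\<^sup>2) * Qf n \<delta> j k W)) \<partial>PiM ({..<n}\<times>{..<p}) (\<lambda>_. density lborel (normal_density 0 \<delta>)))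
     = ennreal (exp (- (u / \<delta>\<^sup>2) * real n * \<delta>\<^sup>2) * (1 / sqrt (1 - 2 * (u / \<delta>\<^sup>2) * \<delta>\<^sup>2)) ^ n)"
    unfolding Qf_def using True diag_mgf[OF assms(1) assms(2), of "u / \<delta>\<^sup>2" n] l assms(4) by simp
  also have "\<dots> = ennreal ((exp (- u) * (1 / sqrt (1 - 2 * u))) ^ n)"
  proof -
    have e1: "exp (- (u / \<delta>\<^sup>2) * real n * \<delta>\<^sup>2) = exp (-u) ^ n"
    proof -
      have "- (u / \<delta>\<^sup>2) * real n * \<delta>\<^sup>2 = real n * (-u)" using assms(1) by simp
      then show ?thesis by (simp only: exp_of_nat_mult)
    qed
    show ?thesis unfolding e1 l power_mult_distrib ..
  qed
  also have "\<dots> \<le> ennreal (exp (4 * real n * u\<^sup>2))"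
  proof (rule ennreal_leI)
    have a: "1 / sqrt (1 - 2 * u) \<le> exp ((2*u)/2 + (2*u)\<^sup>2)" using assms(4) by (intro h2) auto
    have "exp (- u) * (1 / sqrt (1 - 2 * u)) \<le> exp (- u) * exp ((2*u)/2 + (2*u)\<^sup>2)"
      using a by (intro mult_left_mono) auto
    also have "\<dots> = exp (4 * u\<^sup>2)" by (simp add: exp_add[symmetric] power2_eq_square)
    finally have b: "exp (- u) * (1 / sqrt (1 - 2 * u)) \<le> exp (4 * u\<^sup>2)" .
    have "(exp (- u) * (1 / sqrt (1 - 2 * u))) ^ n \<le> (exp (4 * u\<^sup>2)) ^ n"
      using b assms(4) by (intro power_mono) auto
    also have "\<dots> = exp (4 * real n * u\<^sup>2)" by (simp add: exp_of_nat_mult[symmetric] mult_ac)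
    finally show "(exp (- u) * (1 / sqrt (1 - 2 * u))) ^ n \<le> exp (4 * real n * u\<^sup>2)" .
  qed
  finally show ?thesis .
qed

lemma chernoff:
  fixes Y :: "'a \<Rightarrow> real"
  assumes "Y \<in> borel_measurable M" "l \<ge> 0"
  shows "emeasure M {x\<in>space M. t \<le> Y x} \<le> ennreal (exp (- l * t)) * (\<integral>\<^sup>+x. ennreal (exp (l * Y x)) \<partial>M)"
proof -
  have S: "{x\<in>space M. t \<le> Y x} \<in> sets M" using assms(1) by measurable
  have "emeasure M {x\<in>space M. t \<le> Y x} = (\<integral>\<^sup>+x. indicator {x\<in>space M. t \<le> Y x} x \<partial>M)"
    using S by simp
  also have "\<dots> \<le> (\<integral>\<^sup>+x. ennreal (exp (- l * t)) * ennreal (exp (l * Y x)) \<partial>M)"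
  proof (rule nn_integral_mono)
    fix x assume "x \<in> space M"
    show "indicator {x\<in>space M. t \<le> Y x} x \<le> ennreal (exp (- l * t)) * ennreal (exp (l * Y x))"
    proof (cases "t \<le> Y x")
      case True
      have "0 \<le> l * (Y x - t)" using True assms(2) by simp
      then have "1 \<le> exp (- l * t) * exp (l * Y x)" by (simp add: exp_add[symmetric] algebra_simps)
      then show ?thesis using True \<open>x \<in> space M\<close> by (simp add: ennreal_mult[symmetric])
    next
      case False
      then show ?thesis by simp
    qed
  qed
  also have "\<dots> = ennreal (exp (- l * t)) * (\<integral>\<^sup>+x. ennreal (exp (l * Y x)) \<partial>M)"
    by (rule nn_integral_cmult) (use assms(1) in measurable)
  finally show ?thesis .
qed

lemma Q_tail:
  fixes \<delta> s L :: real and n p j k :: nat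
  assumes "\<delta> > 0" "j < p" "k < p" "n \<ge> 1" "L \<ge> 0" "\<bar>s\<bar> = 1"
  shows "emeasure (PiM ({..<n}\<times>{..<p}) (\<lambda>_. density lborel (normal_density 0 \<delta>)))
           {W\<in>space (PiM ({..<n}\<times>{..<p}) (\<lambda>_. density lborel (normal_density 0 \<delta>))).
              real n * (20 * \<delta>\<^sup>2 * (sqrt (L / real n) + L / real n)) \<le> s * Qf n \<delta> j k W}
         \<le> ennreal (exp (- L))"
proof -
  let ?P = "PiM ({..<n}\<times>{..<p}) (\<lambda>_. density lborel (normal_density 0 \<delta>))"
  define r where "r = sqrt (L / real n)"
  have r0: "r \<ge> 0" unfolding r_def using assms by auto
  have rr: "r\<^sup>2 = L / real n" unfolding r_def using assms by simp
  have Lr: "L = real n * r\<^sup>2" using rr assms(4) by (simp add: field_simps)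
  define u where "u = min r (1/4)"
  have u0: "u \<ge> 0" "u \<le> 1/4" unfolding u_def using r0 by auto
  define t where "t = real n * (20 * \<delta>\<^sup>2 * (r + L / real n))"
  have meas: "(\<lambda>W. s * Qf n \<delta> j k W) \<in> borel_measurable ?P"
    using Q_meas[OF assms(2,3), of n \<delta> \<delta>] by measurable
  have "emeasure ?P {W\<in>space ?P. t \<le> s * Qf n \<delta> j k W}
      \<le> ennreal (exp (- (u/\<delta>\<^sup>2) * t)) * (\<integral>\<^sup>+W. ennreal (exp ((u/\<delta>\<^sup>2) * (s * Qf n \<delta> j k W))) \<partial>?P)"
    by (rule chernoff[OF meas]) (use u0 in auto)
  also have "\<dots> \<le> ennreal (exp (- (u/\<delta>\<^sup>2) * t)) * ennreal (exp (4 * real n * u\<^sup>2))"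
  proof (rule mult_left_mono)
    have "(\<integral>\<^sup>+W. ennreal (exp ((u/\<delta>\<^sup>2) * (s * Qf n \<delta> j k W))) \<partial>?P)
           = (\<integral>\<^sup>+W. ennreal (exp (((s*u)/\<delta>\<^sup>2) * Qf n \<delta> j k W)) \<partial>?P)"
      by (simp add: mult_ac)
    also have "\<dots> \<le> ennreal (exp (4 * real n * (s*u)\<^sup>2))"
      by (rule Q_mgf[OF assms(1,2,3)]) (use u0 assms(6) in \<open>auto simp: abs_mult\<close>)
    also have "(s*u)\<^sup>2 = u\<^sup>2"
    proof -
      have "s\<^sup>2 = 1" using power2_abs[of s] assms(6) by simp
      then show ?thesis by (simp add: power_mult_distrib)
    qed
    finally show "(\<integral>\<^sup>+W. ennreal (exp ((u/\<delta>\<^sup>2) * (s * Qf n \<delta> j k W))) \<partial>?P) \<le> ennreal (exp (4 * real n * u\<^sup>2))" .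
  qed simp
  also have "ennreal (exp (- (u/\<delta>\<^sup>2) * t)) * ennreal (exp (4 * real n * u\<^sup>2))
           = ennreal (exp (- (u/\<delta>\<^sup>2) * t + 4 * real n * u\<^sup>2))"
    by (simp add: ennreal_mult[symmetric] flip: exp_add)
  also have "\<dots> \<le> ennreal (exp (- L))"
  proof (rule ennreal_leI, subst exp_le_cancel_iff)
    have tt: "(u/\<delta>\<^sup>2) * t = real n * (20 * u * (r + r\<^sup>2))"
      unfolding t_def rr[symmetric] using assms(1) by (simp add: field_simps)
    have key: "4 * u\<^sup>2 - 20 * u * (r + r\<^sup>2) + r\<^sup>2 \<le> 0"
    proof (cases "r \<le> 1/4")
      case True
      then have "u = r" unfolding u_def by simp
      have "4 * u\<^sup>2 - 20 * u * (r + r\<^sup>2) + r\<^sup>2 = -(15 * r\<^sup>2 + 20 * r * r\<^sup>2)"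
        using \<open>u = r\<close> by (simp add: algebra_simps power2_eq_square)
      moreover have "0 \<le> 15 * r\<^sup>2 + 20 * r * r\<^sup>2"
        by (intro add_nonneg_nonneg mult_nonneg_nonneg) (use r0 in auto)
      ultimately show ?thesis by linarith
    next
      case False
      then have "u = 1/4" unfolding u_def by simp
      have "4 * u\<^sup>2 - 20 * u * (r + r\<^sup>2) + r\<^sup>2 = 1/4 - 5 * r - 4 * r\<^sup>2"
        unfolding \<open>u = 1/4\<close> by (simp add: algebra_simps power2_eq_square)
      moreover have "0 \<le> r\<^sup>2" by simp
      ultimately show ?thesis using False by linarith
    qed
    have "- (u/\<delta>\<^sup>2) * t + 4 * real n * u\<^sup>2 + L = real n * (4 * u\<^sup>2 - 20 * u * (r + r\<^sup>2) + r\<^sup>2)"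
      using tt Lr by (simp add: algebra_simps)
    also have "\<dots> \<le> 0" using key by (simp add: mult_nonneg_nonpos)
    finally show "- (u/\<delta>\<^sup>2) * t + 4 * real n * u\<^sup>2 \<le> - L" by simp
  qed
  finally show ?thesis unfolding t_def r_def .
qed

lemma lin_tail:
  fixes \<delta> V t :: real and n p k :: nat and c :: "nat \<Rightarrow> real"
  assumes "\<delta> > 0" "k < p" "V > 0" "(\<Sum>i<n. (c i)\<^sup>2) \<le> V" "t \<ge> 0"
  shows "emeasure (PiM ({..<n}\<times>{..<p}) (\<lambda>_. density lborel (normal_density 0 \<delta>)))
           {W\<in>space (PiM ({..<n}\<times>{..<p}) (\<lambda>_. density lborel (normal_density 0 \<delta>))).
              t \<le> (\<Sum>i<n. c i * W (i,k))}
         \<le> ennreal (exp (- t\<^sup>2 / (2 * \<delta>\<^sup>2 * V)))"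
proof -
  let ?P = "PiM ({..<n}\<times>{..<p}) (\<lambda>_. density lborel (normal_density 0 \<delta>))"
  define l where "l = t / (\<delta>\<^sup>2 * V)"
  have l0: "l \<ge> 0" unfolding l_def using assms by auto
  have "emeasure ?P {W\<in>space ?P. t \<le> (\<Sum>i<n. c i * W (i,k))}
      \<le> ennreal (exp (- l * t)) * (\<integral>\<^sup>+W. ennreal (exp (l * (\<Sum>i<n. c i * W (i,k)))) \<partial>?P)"
    by (rule chernoff[OF lin_meas[OF assms(2)] l0])
  also have "(\<integral>\<^sup>+W. ennreal (exp (l * (\<Sum>i<n. c i * W (i,k)))) \<partial>?P) = ennreal (exp (l\<^sup>2 * \<delta>\<^sup>2 * (\<Sum>i<n. (c i)\<^sup>2) / 2))"
    by (rule lin_mgf[OF assms(1)]) (use assms in auto)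
  also have "ennreal (exp (- l * t)) * ennreal (exp (l\<^sup>2 * \<delta>\<^sup>2 * (\<Sum>i<n. (c i)\<^sup>2) / 2))
      = ennreal (exp (- l * t + l\<^sup>2 * \<delta>\<^sup>2 * (\<Sum>i<n. (c i)\<^sup>2) / 2))"
    by (simp add: ennreal_mult[symmetric] flip: exp_add)
  also have "\<dots> \<le> ennreal (exp (- t\<^sup>2 / (2 * \<delta>\<^sup>2 * V)))"
  proof (rule ennreal_leI, subst exp_le_cancel_iff)
    have "l\<^sup>2 * \<delta>\<^sup>2 * (\<Sum>i<n. (c i)\<^sup>2) / 2 \<le> l\<^sup>2 * \<delta>\<^sup>2 * V / 2"
      using assms(4) by (intro divide_right_mono mult_left_mono) auto
    moreover have "- l * t + l\<^sup>2 * \<delta>\<^sup>2 * V / 2 = - t\<^sup>2 / (2 * \<delta>\<^sup>2 * V)"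
      unfolding l_def using assms(1,3) by (simp add: field_simps power2_eq_square)
    ultimately show "- l * t + l\<^sup>2 * \<delta>\<^sup>2 * (\<Sum>i<n. (c i)\<^sup>2) / 2 \<le> - t\<^sup>2 / (2 * \<delta>\<^sup>2 * V)" by linarith
  qed
  finally show ?thesis .
qed


definition MS :: "(nat \<Rightarrow> nat) \<Rightarrow> nat \<Rightarrow> (nat \<Rightarrow> nat \<Rightarrow> real) \<Rightarrow> real Matrix.mat" where
  "MS h m A = Matrix.mat m m (\<lambda>(a,b). A (h a) (h b))"

lemma MS_carrier[simp]: "MS h m A \<in> carrier_mat m m"
  unfolding MS_def by simp

lemma MS_dim[simp]: "dim_row (MS h m A) = m" "dim_col (MS h m A) = m"
  unfolding MS_def by simp_all

lemma MS_index[simp]: "a < m \<Longrightarrow> b < m \<Longrightarrow> MS h m A $$ (a,b) = A (h a) (h b)"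
  unfolding MS_def by simp

definition Binv :: "(nat \<Rightarrow> nat) \<Rightarrow> nat \<Rightarrow> (nat \<Rightarrow> nat \<Rightarrow> real) \<Rightarrow> real Matrix.mat" where
  "Binv h m A = (1 / Determinant.det (MS h m A)) \<cdot>\<^sub>m adj_mat (MS h m A)"

lemma Binv_carrier[simp]: "Binv h m A \<in> carrier_mat m m"
  unfolding Binv_def using adj_mat(1)[OF MS_carrier] by simp

lemma Binv_dim[simp]: "dim_row (Binv h m A) = m" "dim_col (Binv h m A) = m"
  using Binv_carrier[of h m A] unfolding carrier_mat_def by auto

lemma adj_dim[simp]: "dim_row (adj_mat (MS h m A)) = m" "dim_col (adj_mat (MS h m A)) = m"
  using adj_mat(1)[OF MS_carrier, of h m A] unfolding carrier_mat_def by auto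

lemma Binv_right:
  assumes "Determinant.det (MS h m A) \<noteq> 0"
  shows "MS h m A * Binv h m A = 1\<^sub>m m"
proof -
  have "MS h m A * Binv h m A = (1 / Determinant.det (MS h m A)) \<cdot>\<^sub>m (MS h m A * adj_mat (MS h m A))"
    unfolding Binv_def by (rule mult_smult_distrib[OF MS_carrier adj_mat(1)[OF MS_carrier]])
  also have "\<dots> = (1 / Determinant.det (MS h m A)) \<cdot>\<^sub>m (Determinant.det (MS h m A) \<cdot>\<^sub>m 1\<^sub>m m)"
    by (simp add: adj_mat(2)[OF MS_carrier])
  also have "\<dots> = 1\<^sub>m m" using assms by (intro eq_matI) auto
  finally show ?thesis .
qed

lemma Binv_left:
  assumes "Determinant.det (MS h m A) \<noteq> 0"
  shows "Binv h m A * MS h m A = 1\<^sub>m m"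
proof -
  have "Binv h m A * MS h m A = (1 / Determinant.det (MS h m A)) \<cdot>\<^sub>m (adj_mat (MS h m A) * MS h m A)"
    unfolding Binv_def by (rule mult_smult_assoc_mat[OF adj_mat(1)[OF MS_carrier] MS_carrier])
  also have "\<dots> = (1 / Determinant.det (MS h m A)) \<cdot>\<^sub>m (Determinant.det (MS h m A) \<cdot>\<^sub>m 1\<^sub>m m)"
    by (simp add: adj_mat(3)[OF MS_carrier])
  also have "\<dots> = 1\<^sub>m m" using assms by (intro eq_matI) auto
  finally show ?thesis .
qed

lemma mult_MS:
  assumes "bij_betw h {0..<m} S" "a < m" "b < m"
  shows "(MS h m A * MS h m B) $$ (a,b) = mat_mult S A B (h a) (h b)"
proof -
  have "(MS h m A * MS h m B) $$ (a,b) = (\<Sum>i\<in>{0..<m}. A (h a) (h i) * B (h i) (h b))"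
    using assms by (simp add: index_mult_mat scalar_prod_def)
  also have "\<dots> = mat_mult S A B (h a) (h b)"
    unfolding mat_mult_def by (rule sum.reindex_bij_betw[OF assms(1), where g="\<lambda>k. A (h a) k * B k (h b)"])
  finally show ?thesis .
qed

lemma inv_iff:
  assumes bij: "bij_betw h {0..<m} S"
  shows "is_sub_inverse S A B \<longleftrightarrow> (MS h m A * MS h m B = 1\<^sub>m m \<and> MS h m B * MS h m A = 1\<^sub>m m)"
proof
  have hS: "\<And>a. a < m \<Longrightarrow> h a \<in> S" using bij by (auto simp: bij_betw_def)
  have inj: "\<And>a b. a < m \<Longrightarrow> b < m \<Longrightarrow> h a = h b \<longleftrightarrow> a = b" using bij by (auto simp: bij_betw_def inj_on_def)
  assume H: "is_sub_inverse S A B"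
  have e: "(MS h m X * MS h m Y) $$ (a,b) = (if a = b then 1 else 0)"
    if "a < m" "b < m" "(X = A \<and> Y = B) \<or> (X = B \<and> Y = A)" for a b X Y
  proof -
    have "(MS h m X * MS h m Y) $$ (a,b) = mat_mult S X Y (h a) (h b)" by (rule mult_MS[OF bij that(1,2)])
    also have "\<dots> = (if h a = h b then 1 else 0)" using H hS[OF that(1)] hS[OF that(2)] that(3)
      unfolding is_sub_inverse_def by auto
    also have "\<dots> = (if a = b then 1 else 0)" using inj[OF that(1,2)] by simp
    finally show ?thesis .
  qed
  have "MS h m A * MS h m B = 1\<^sub>m m"
  proof (rule eq_matI)
    fix a b assume "a < dim_row (1\<^sub>m m)" "b < dim_col (1\<^sub>m m)"
    then have ab: "a < m" "b < m" by auto
    have "(MS h m A * MS h m B) $$ (a,b) = (if a = b then 1 else 0)" by (rule e) (use ab in auto)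
    then show "(MS h m A * MS h m B) $$ (a,b) = 1\<^sub>m m $$ (a,b)" using ab by simp
  qed auto
  moreover have "MS h m B * MS h m A = 1\<^sub>m m"
  proof (rule eq_matI)
    fix a b assume "a < dim_row (1\<^sub>m m)" "b < dim_col (1\<^sub>m m)"
    then have ab: "a < m" "b < m" by auto
    have "(MS h m B * MS h m A) $$ (a,b) = (if a = b then 1 else 0)" by (rule e) (use ab in auto)
    then show "(MS h m B * MS h m A) $$ (a,b) = 1\<^sub>m m $$ (a,b)" using ab by simp
  qed auto
  ultimately show "MS h m A * MS h m B = 1\<^sub>m m \<and> MS h m B * MS h m A = 1\<^sub>m m" ..
next
  assume H: "MS h m A * MS h m B = 1\<^sub>m m \<and> MS h m B * MS h m A = 1\<^sub>m m"
  have inj: "\<And>a b. a < m \<Longrightarrow> b < m \<Longrightarrow> h a = h b \<longleftrightarrow> a = b" using bij by (auto simp: bij_betw_def inj_on_def)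
  show "is_sub_inverse S A B" unfolding is_sub_inverse_def
  proof (intro ballI)
    fix i j assume "i \<in> S" "j \<in> S"
    then obtain a b where ab: "a < m" "b < m" "h a = i" "h b = j"
      using bij unfolding bij_betw_def by auto
    have "mat_mult S A B i j = (MS h m A * MS h m B) $$ (a,b)" using mult_MS[OF bij ab(1,2)] ab by simp
    moreover have "mat_mult S B A i j = (MS h m B * MS h m A) $$ (a,b)" using mult_MS[OF bij ab(1,2)] ab by simp
    ultimately show "mat_mult S A B i j = (if i = j then 1 else 0) \<and> mat_mult S B A i j = (if i = j then 1 else 0)"
      using H ab inj by auto
  qed
qed

lemma MS_of_Binv:
  assumes bij: "bij_betw h {0..<m} S"
  shows "MS h m (\<lambda>k j. Binv h m A $$ (the_inv_into {0..<m} h k, the_inv_into {0..<m} h j)) = Binv h m A"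
proof (rule eq_matI)
  have inj: "inj_on h {0..<m}" using bij by (simp add: bij_betw_def)
  fix a b assume "a < dim_row (Binv h m A)" "b < dim_col (Binv h m A)"
  then have "a < m" "b < m" using Binv_carrier[of h m A] by auto
  then show "MS h m (\<lambda>k j. Binv h m A $$ (the_inv_into {0..<m} h k, the_inv_into {0..<m} h j)) $$ (a, b) = Binv h m A $$ (a, b)"
    using inj by (simp add: the_inv_into_f_f)
qed (use Binv_carrier[of h m A] in auto)

lemma K1:
  assumes bij: "bij_betw h {0..<m} S"
  shows "sub_invertible S A \<longleftrightarrow> Determinant.det (MS h m A) \<noteq> 0"
proof
  assume "sub_invertible S A"
  then obtain B where "is_sub_inverse S A B" unfolding sub_invertible_def by blast
  then have "MS h m A * MS h m B = 1\<^sub>m m" using inv_iff[OF bij] by blast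
  then have "Determinant.det (MS h m A) * Determinant.det (MS h m B) = 1"
    using det_mult[OF MS_carrier MS_carrier, of h m A h B] by simp
  then show "Determinant.det (MS h m A) \<noteq> 0" by auto
next
  assume d: "Determinant.det (MS h m A) \<noteq> 0"
  let ?B = "\<lambda>k j. Binv h m A $$ (the_inv_into {0..<m} h k, the_inv_into {0..<m} h j)"
  have "is_sub_inverse S A ?B"
    unfolding inv_iff[OF bij] MS_of_Binv[OF bij] using Binv_right[OF d] Binv_left[OF d] by simp
  then show "sub_invertible S A" unfolding sub_invertible_def by blast
qed

lemma K2:
  assumes bij: "bij_betw h {0..<m} S" and d: "Determinant.det (MS h m A) \<noteq> 0" and kj: "k \<in> S" "j \<in> S"
  shows "sub_inv S A k j = Binv h m A $$ (the_inv_into {0..<m} h k, the_inv_into {0..<m} h j)"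
proof -
  have "sub_invertible S A" using K1[OF bij] d by simp
  then have "is_sub_inverse S A (sub_inv S A)"
    unfolding sub_invertible_def sub_inv_def by (rule someI_ex)
  then have L: "MS h m (sub_inv S A) * MS h m A = 1\<^sub>m m" using inv_iff[OF bij] by blast
  have "MS h m (sub_inv S A) = MS h m (sub_inv S A) * (MS h m A * Binv h m A)"
    using Binv_right[OF d] by simp
  also have "\<dots> = (MS h m (sub_inv S A) * MS h m A) * Binv h m A"
    by (rule assoc_mult_mat[OF MS_carrier MS_carrier Binv_carrier, symmetric])
  also have "\<dots> = Binv h m A" using L by simp
  finally have E: "MS h m (sub_inv S A) = Binv h m A" .
  have ka: "the_inv_into {0..<m} h k < m" "the_inv_into {0..<m} h j < m"
    using bij kj unfolding bij_betw_def by (auto simp: the_inv_into_f_f)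
  have hk: "h (the_inv_into {0..<m} h k) = k" "h (the_inv_into {0..<m} h j) = j"
    using f_the_inv_into_f[of h "{0..<m}"] bij kj unfolding bij_betw_def by auto
  have "sub_inv S A k j = MS h m (sub_inv S A) $$ (the_inv_into {0..<m} h k, the_inv_into {0..<m} h j)"
    using ka hk by simp
  then show ?thesis using E by simp
qed

lemma inf_norm_cong:
  assumes "\<And>i j. i \<in> I \<Longrightarrow> j \<in> J \<Longrightarrow> A i j = B i j"
  shows "inf_norm I J A = inf_norm I J B"
proof -
  have "(\<lambda>i. \<Sum>j\<in>J. \<bar>A i j\<bar>) ` I = (\<lambda>i. \<Sum>j\<in>J. \<bar>B i j\<bar>) ` I"
    using assms by (intro image_cong refl sum.cong) auto
  then show ?thesis unfolding inf_norm_def by simp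
qed

lemma irrep_eq:
  assumes bij: "bij_betw h {0..<m} S" and d: "Determinant.det (MS h m A) \<noteq> 0"
  shows "irrep p S A = inf_norm ({..<p} - S) S
     (\<lambda>i j. \<Sum>k\<in>S. A i k * Binv h m A $$ (the_inv_into {0..<m} h k, the_inv_into {0..<m} h j))"
  unfolding irrep_def mat_mult_def
  by (intro inf_norm_cong sum.cong refl) (simp add: K2[OF bij d])

lemma det_meas:
  assumes "\<And>w. D w \<in> carrier_mat d d" "\<And>a b. a < d \<Longrightarrow> b < d \<Longrightarrow> (\<lambda>w. D w $$ (a,b)) \<in> borel_measurable M"
  shows "(\<lambda>w. Determinant.det (D w) :: real) \<in> borel_measurable M"
proof -
  have "(\<lambda>w. Determinant.det (D w)) = (\<lambda>w. \<Sum>p \<in> {p. p permutes {0..<d}}. signof p * (\<Prod>i = 0..<d. D w $$ (i, p i)))"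
    using det_def'[OF assms(1)] by (intro ext) simp
  also have "\<dots> \<in> borel_measurable M"
  proof (intro borel_measurable_sum borel_measurable_times borel_measurable_const borel_measurable_prod)
    fix p i assume "p \<in> {p. p permutes {0..<d}}" "i \<in> {0..<d}"
    then have pi: "p i < d" and i: "i < d" using permutes_in_image[of p "{0..<d}" i] by auto
    show "(\<lambda>w. D w $$ (i, p i)) \<in> borel_measurable M" by (rule assms(2)[OF i pi])
  qed
  finally show ?thesis .
qed

lemma adj_meas:
  assumes "\<And>a b. a < m \<Longrightarrow> b < m \<Longrightarrow> (\<lambda>w. F w (h a) (h b)) \<in> borel_measurable M" "a < m" "b < m"
  shows "(\<lambda>w. adj_mat (MS h m (F w)) $$ (a,b)) \<in> borel_measurable M"
proof -
  have "(\<lambda>w. adj_mat (MS h m (F w)) $$ (a,b)) = (\<lambda>w. (-1)^(b+a) * Determinant.det (mat_delete (MS h m (F w)) b a))"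
    using assms(2,3) by (intro ext) (simp add: adj_mat_def cofactor_def)
  also have "\<dots> \<in> borel_measurable M"
  proof (intro borel_measurable_times borel_measurable_const det_meas)
    fix w show "mat_delete (MS h m (F w)) b a \<in> carrier_mat (m-1) (m-1)"
      by (rule mat_delete_carrier[OF MS_carrier])
  next
    fix a' b' assume ab: "a' < m - 1" "b' < m - 1"
    have "(\<lambda>w. mat_delete (MS h m (F w)) b a $$ (a', b')) =
          (\<lambda>w. F w (h (if a' < b then a' else Suc a')) (h (if b' < a then b' else Suc b')))"
      using ab by (intro ext) (simp add: mat_delete_def)
    also have "\<dots> \<in> borel_measurable M"
      by (rule assms(1)) (use ab in auto)
    finally show "(\<lambda>w. mat_delete (MS h m (F w)) b a $$ (a', b')) \<in> borel_measurable M" .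
  qed
  finally show ?thesis .
qed

lemma Binv_meas:
  assumes "\<And>a b. a < m \<Longrightarrow> b < m \<Longrightarrow> (\<lambda>w. F w (h a) (h b)) \<in> borel_measurable M" "a < m" "b < m"
  shows "(\<lambda>w. Binv h m (F w) $$ (a,b)) \<in> borel_measurable M"
proof -
  have "(\<lambda>w. Binv h m (F w) $$ (a,b)) = (\<lambda>w. (1 / Determinant.det (MS h m (F w))) * adj_mat (MS h m (F w)) $$ (a,b))"
    using assms(2,3) by (intro ext) (simp add: Binv_def del: times_divide_eq_left)
  also have "\<dots> \<in> borel_measurable M"
    by (intro borel_measurable_times borel_measurable_divide borel_measurable_const det_meas[where d=m] adj_meas[where F=F and h=h and m=m, OF assms(1)])
       (use assms in auto)
  finally show ?thesis .
qed


lemma meas_le: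
  assumes "finite_measure M" "emeasure M A \<le> ennreal c" "0 \<le> c"
  shows "measure M A \<le> c"
  using assms finite_measure.emeasure_eq_measure[OF assms(1), of A] by (simp add: ennreal_le_iff)

lemma NG_meas:
  fixes n p i k :: nat
  assumes "i < p" "k < p"
  shows "(\<lambda>W. noisy_gram n \<delta> X W i k) \<in> borel_measurable (PiM ({..<n}\<times>{..<p}) (\<lambda>_. density lborel (normal_density 0 \<delta>')))"
  unfolding noisy_gram_def
  by (intro borel_measurable_diff borel_measurable_times borel_measurable_const borel_measurable_sum borel_measurable_add meas_comp)
     (use assms in auto)

lemma NG_split:
  fixes n j k :: nat
  assumes "n \<ge> 1"
  shows "noisy_gram n \<delta> X W j k - gram n X j k =
    (\<Sum>i<n. X i j / real n * W (i,k)) + (\<Sum>i<n. X i k / real n * W (i,j)) + Qf n \<delta> j k W / real n"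
proof -
  have e: "(\<Sum>i<n. (X i j + W (i, j)) * (X i k + W (i, k))) =
     (\<Sum>i<n. X i j * X i k) + (\<Sum>i<n. X i j * W (i,k)) + (\<Sum>i<n. X i k * W (i,j)) + (\<Sum>i<n. W (i,j) * W (i,k))"
    by (simp add: sum.distrib algebra_simps)
  have n0: "real n \<noteq> 0" using assms by simp
  show ?thesis
    unfolding noisy_gram_def gram_def Qf_def e
    using n0 by (simp add: sum_divide_distrib[symmetric] field_simps)
qed


lemma T_meas:
  fixes n p :: nat and X :: "nat \<Rightarrow> nat \<Rightarrow> real" and \<delta> c :: real and S :: "nat set"
  assumes Ssub: "S \<subset> {..<p}"
  shows "{W \<in> space (PiM ({..<n}\<times>{..<p}) (\<lambda>_. density lborel (normal_density 0 \<delta>))).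
            sub_invertible S (noisy_gram n \<delta> X W) \<and> irrep p S (noisy_gram n \<delta> X W) \<le> c}
         \<in> sets (PiM ({..<n}\<times>{..<p}) (\<lambda>_. density lborel (normal_density 0 \<delta>)))"
proof -
  let ?P = "PiM ({..<n}\<times>{..<p}) (\<lambda>_. density lborel (normal_density 0 \<delta>))"
  let ?NG = "\<lambda>W. noisy_gram n \<delta> X W"
  have finS: "finite S" using Ssub finite_subset[of S "{..<p}"] by auto
  obtain h where bij: "bij_betw h {0..<card S} S" using ex_bij_betw_nat_finite[OF finS] by blast
  define m where "m = card S"
  define hi where "hi = the_inv_into {0..<m} h"
  have bij': "bij_betw h {0..<m} S" using bij unfolding m_def .
  have hS: "h a < p" if "a < m" for a
  proof -
    have "h a \<in> S" using bij' that by (auto simp: bij_betw_def)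
    then show ?thesis using Ssub by blast
  qed
  have hi: "k \<in> S \<Longrightarrow> hi k < m" for k
    using bij' unfolding bij_betw_def hi_def by (auto simp: the_inv_into_f_f)
  have NGm: "i < p \<Longrightarrow> k < p \<Longrightarrow> (\<lambda>W. ?NG W i k) \<in> borel_measurable ?P" for i k
    by (rule NG_meas)
  have NGh: "a < m \<Longrightarrow> b < m \<Longrightarrow> (\<lambda>W. ?NG W (h a) (h b)) \<in> borel_measurable ?P" for a b
    using hS by (intro NGm) auto
  have f1: "(\<lambda>W. Determinant.det (MS h m (?NG W))) \<in> borel_measurable ?P"
    by (rule det_meas[where d=m]) (auto intro: NGh)
  define g where "g W = inf_norm ({..<p} - S) S (\<lambda>i j. \<Sum>k\<in>S. ?NG W i k * Binv h m (?NG W) $$ (hi k, hi j))" for W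
  have Sc: "{..<p} - S \<noteq> {}" using Ssub by auto
  have f2: "g \<in> borel_measurable ?P"
  proof -
    have "g = (\<lambda>W. Max ((\<lambda>i. \<Sum>j\<in>S. \<bar>\<Sum>k\<in>S. ?NG W i k * Binv h m (?NG W) $$ (hi k, hi j)\<bar>) ` ({..<p} - S)))"
      unfolding g_def inf_norm_def using Sc by simp
    also have "\<dots> \<in> borel_measurable ?P"
    proof (rule borel_measurable_Max)
      show "finite ({..<p} - S)" by simp
      fix i assume i: "i \<in> {..<p} - S"
      show "(\<lambda>W. \<Sum>j\<in>S. \<bar>\<Sum>k\<in>S. ?NG W i k * Binv h m (?NG W) $$ (hi k, hi j)\<bar>) \<in> borel_measurable ?P"
      proof (intro borel_measurable_sum borel_measurable_abs borel_measurable_times)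
        fix j k assume j: "j \<in> S" and k: "k \<in> S"
        show "(\<lambda>W. ?NG W i k) \<in> borel_measurable ?P" using i k Ssub by (intro NGm) auto
        show "(\<lambda>W. Binv h m (?NG W) $$ (hi k, hi j)) \<in> borel_measurable ?P"
          by (rule Binv_meas[where F="?NG"]) (use NGh hi j k in auto)
      qed
    qed
    finally show ?thesis .
  qed
  have eq: "{W \<in> space ?P. sub_invertible S (?NG W) \<and> irrep p S (?NG W) \<le> c}
          = {W \<in> space ?P. Determinant.det (MS h m (?NG W)) \<noteq> 0 \<and> g W \<le> c}"
  proof (rule Collect_cong)
    fix W
    have "(sub_invertible S (?NG W) \<and> irrep p S (?NG W) \<le> c) = (Determinant.det (MS h m (?NG W)) \<noteq> 0 \<and> g W \<le> c)"
      using K1[OF bij'] irrep_eq[OF bij'] unfolding g_def hi_def by auto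
    then show "(W \<in> space ?P \<and> sub_invertible S (?NG W) \<and> irrep p S (?NG W) \<le> c) = (W \<in> space ?P \<and> Determinant.det (MS h m (?NG W)) \<noteq> 0 \<and> g W \<le> c)"
      by simp
  qed
  show ?thesis unfolding eq using f1 f2 by measurable
qed

lemma main:
  fixes n p :: nat and X :: "nat \<Rightarrow> nat \<Rightarrow> real" and M \<delta> \<eta> \<epsilon>0 \<alpha> :: real and S :: "nat set"
  assumes n1: "1 \<le> n" and M0: "0 < M"
    and Xb: "\<forall>j<p. 1 / real n * (\<Sum>i<n. (X i j)\<^sup>2) \<le> M\<^sup>2"
    and d0: "0 < \<delta>" and Sne: "S \<noteq> {}" and Ssub: "S \<subset> {..<p}"
    and hyp: "\<forall>\<Delta>. inf_norm {..<p} {..<p} \<Delta> \<le> \<epsilon>0 \<longrightarrow>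
                sub_invertible S (\<lambda>j k. gram n X j k + \<Delta> j k) \<and> irrep p S (\<lambda>j k. gram n X j k + \<Delta> j k) \<le> 1 - \<eta> / 2"
    and a0: "0 < \<alpha>" and a1: "\<alpha> < 1"
    and eps: "real p * (2 * M * sqrt (2 * \<delta>\<^sup>2 * ln (4 * (real p)\<^sup>2 / \<alpha>) / real n) +
                 20 * \<delta>\<^sup>2 * (sqrt (ln (4 * (real p)\<^sup>2 / \<alpha>) / real n) + ln (4 * (real p)\<^sup>2 / \<alpha>) / real n)) \<le> \<epsilon>0"
  shows "1 - \<alpha> \<le> measure (noise_measure n p \<delta>)
           {W \<in> space (noise_measure n p \<delta>). sub_invertible S (noisy_gram n \<delta> X W) \<and> irrep p S (noisy_gram n \<delta> X W) \<le> 1 - \<eta> / 2}"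
proof -
  define P where "P = PiM ({..<n}\<times>{..<p}) (\<lambda>_. density lborel (normal_density 0 \<delta>))"
  have PN: "noise_measure n p \<delta> = P" unfolding P_def noise_measure_def ..
  interpret prob_space P unfolding P_def by (rule prob_space_PiM) (rule prob_space_normal_density[OF d0])
  define T where "T = {W \<in> space P. sub_invertible S (noisy_gram n \<delta> X W) \<and> irrep p S (noisy_gram n \<delta> X W) \<le> 1 - \<eta> / 2}"
  have Tsets: "T \<in> sets P" unfolding T_def P_def by (rule T_meas[OF Ssub])
  have p1: "p \<ge> 1" using Sne Ssub by auto
  have "0 \<in> {..<p}" using p1 by simp
  then have ne_p: "{..<p} \<noteq> {}" by blast
  define L where "L = ln (4 * (real p)\<^sup>2 / \<alpha>)"
  have pp: "(real p)\<^sup>2 \<ge> 1" using p1 by simp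
  have L0: "L \<ge> 0" unfolding L_def using a0 a1 pp by (intro ln_ge_zero) (simp add: field_simps)
  have eL: "exp (- L) = \<alpha> / (4 * (real p)\<^sup>2)"
  proof -
    have pos: "4 * (real p)\<^sup>2 / \<alpha> > 0" using a0 p1 by (intro divide_pos_pos) auto
    show ?thesis unfolding L_def by (simp add: exp_minus exp_ln[OF pos])
  qed
  define t1 where "t1 = 2 * M * sqrt (2 * \<delta>\<^sup>2 * L / real n)"
  define t2 where "t2 = 20 * \<delta>\<^sup>2 * (sqrt (L / real n) + L / real n)"
  have eps': "real p * (t1 + t2) \<le> \<epsilon>0" using eps unfolding t1_def t2_def L_def .
  define c where "c j i = X i j / real n" for j i
  define B where "B q = (case q of (j,k,r) \<Rightarrow>
      if r = (0::nat) then {W\<in>space P. t1/2 \<le> (\<Sum>i<n. c j i * W (i,k))}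
      else if r = 1 then {W\<in>space P. t1/2 \<le> (\<Sum>i<n. (- c j i) * W (i,k))}
      else if r = 2 then {W\<in>space P. real n * t2 \<le> 1 * Qf n \<delta> j k W}
      else {W\<in>space P. real n * t2 \<le> (-1) * Qf n \<delta> j k W})" for q
  define Idx where "Idx = {..<p} \<times> {..<p} \<times> {..<4::nat}"
  define U where "U = (\<Union>q\<in>Idx. B q)"
  have Bsets: "B q \<in> sets P" if qI: "q \<in> Idx" for q
  proof -
    obtain j k r where q: "q = (j,k,r)" "j < p" "k < p" using qI unfolding Idx_def by auto
    have l1: "(\<lambda>W. \<Sum>i<n. c j i * W (i,k)) \<in> borel_measurable P" unfolding P_def by (rule lin_meas[OF q(3)])
    have l2: "(\<lambda>W. \<Sum>i<n. (- c j i) * W (i,k)) \<in> borel_measurable P" unfolding P_def by (rule lin_meas[OF q(3)])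
    have l3: "Qf n \<delta> j k \<in> borel_measurable P" unfolding P_def by (rule Q_meas[OF q(2,3)])
    show ?thesis unfolding B_def q(1) using l1 l2 l3 by simp measurable
  qed
  have lin_b: "measure P {W\<in>space P. t1/2 \<le> (\<Sum>i<n. dd i * W (i,kk))} \<le> exp (- L)"
    if "kk < p" "\<And>i. (dd i)\<^sup>2 = (c jj i)\<^sup>2" "jj < p" for dd :: "nat \<Rightarrow> real" and jj kk :: nat
  proof (rule meas_le)
    show "finite_measure P" by (rule finite_measure_axioms)
    have n0: "real n > 0" using n1 by simp
    define V where "V = M\<^sup>2 / real n"
    have V0: "V > 0" unfolding V_def using M0 n0 by simp
    have sV: "(\<Sum>i<n. (dd i)\<^sup>2) \<le> V"
    proof -
      have "(\<Sum>i<n. (dd i)\<^sup>2) = (1 / real n * (\<Sum>i<n. (X i jj)\<^sup>2)) / real n"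
        using that(2) unfolding c_def by (simp add: power_divide sum_divide_distrib power2_eq_square)
      also have "\<dots> \<le> M\<^sup>2 / real n" using Xb that(3) n0 by (intro divide_right_mono) auto
      finally show ?thesis unfolding V_def .
    qed
    have t0: "t1/2 \<ge> 0" unfolding t1_def using M0 L0 n0 by simp
    have eqL: "(t1/2)\<^sup>2 / (2 * \<delta>\<^sup>2 * V) = L"
    proof -
      have "(t1/2)\<^sup>2 = M\<^sup>2 * (2 * \<delta>\<^sup>2 * L / real n)"
        unfolding t1_def using L0 n0 by (simp add: power_mult_distrib)
      then show ?thesis unfolding V_def using M0 d0 n0 by (simp add: field_simps)
    qed
    have eqL': "- (t1/2)\<^sup>2 / (2 * \<delta>\<^sup>2 * V) = - L" using eqL by (metis minus_divide_left)
    have "emeasure P {W\<in>space P. t1/2 \<le> (\<Sum>i<n. dd i * W (i,kk))} \<le> ennreal (exp (- (t1/2)\<^sup>2 / (2 * \<delta>\<^sup>2 * V)))"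
      unfolding P_def by (rule lin_tail[OF d0 that(1) V0 sV t0])
    then show "emeasure P {W\<in>space P. t1/2 \<le> (\<Sum>i<n. dd i * W (i,kk))} \<le> ennreal (exp (- L))"
      by (simp only: eqL')
  qed simp
  have Q_b: "measure P {W\<in>space P. real n * t2 \<le> s * Qf n \<delta> j k W} \<le> exp (- L)"
    if "j < p" "k < p" "\<bar>s\<bar> = 1" for s j k
  proof (rule meas_le)
    show "finite_measure P" by (rule finite_measure_axioms)
    show "emeasure P {W\<in>space P. real n * t2 \<le> s * Qf n \<delta> j k W} \<le> ennreal (exp (- L))"
      unfolding P_def t2_def by (rule Q_tail[OF d0 that(1,2) n1 L0 that(3)])
  qed simp
  have Bb: "measure P (B q) \<le> exp (- L)" if qI: "q \<in> Idx" for q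
  proof -
    obtain j k r where q: "q = (j,k,r)" "j < p" "k < p" "r < 4" using qI unfolding Idx_def by auto
    consider "r = 0" | "r = 1" | "r = 2" | "r = 3" using q(4) by linarith
    then show ?thesis
    proof cases
      case 1
      then have "B q = {W\<in>space P. t1/2 \<le> (\<Sum>i<n. c j i * W (i,k))}" unfolding B_def q(1) by simp
      then show ?thesis by (simp only:) (rule lin_b[OF q(3) _ q(2)], simp)
    next
      case 2
      then have "B q = {W\<in>space P. t1/2 \<le> (\<Sum>i<n. (- c j i) * W (i,k))}" unfolding B_def q(1) by simp
      then show ?thesis by (simp only:) (rule lin_b[OF q(3) _ q(2)], simp)
    next
      case 3
      then have "B q = {W\<in>space P. real n * t2 \<le> 1 * Qf n \<delta> j k W}" unfolding B_def q(1) by simp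
      then show ?thesis by (simp only:) (rule Q_b[OF q(2,3)], simp)
    next
      case 4
      then have "B q = {W\<in>space P. real n * t2 \<le> (-1) * Qf n \<delta> j k W}" unfolding B_def q(1) by simp
      then show ?thesis by (simp only:) (rule Q_b[OF q(2,3)], simp)
    qed
  qed
  have finIdx: "finite Idx" unfolding Idx_def by auto
  have cardIdx: "card Idx = 4 * p * p" unfolding Idx_def by (simp add: card_cartesian_product)
  have U_b: "measure P U \<le> \<alpha>"
  proof -
    have "measure P U \<le> (\<Sum>q\<in>Idx. measure P (B q))"
      unfolding U_def by (rule finite_measure_subadditive_finite[OF finIdx]) (use Bsets in auto)
    also have "\<dots> \<le> (\<Sum>q\<in>Idx. exp (- L))" by (rule sum_mono) (rule Bb)
    also have "\<dots> = real (4 * p * p) * (\<alpha> / (4 * (real p)\<^sup>2))" by (simp add: cardIdx eL)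
    also have "\<dots> = \<alpha>" using p1 by (simp add: power2_eq_square field_simps)
    finally show ?thesis .
  qed
  have Usets: "U \<in> sets P" unfolding U_def using Bsets finIdx by auto
  have sub: "space P - T \<subseteq> U"
  proof
    fix W assume W: "W \<in> space P - T"
    show "W \<in> U"
    proof (rule ccontr)
      assume nU: "W \<notin> U"
      have Wsp: "W \<in> space P" using W by simp
      have notB: "W \<notin> B (j,k,r)" if "j < p" "k < p" "r < 4" for j k r
      proof -
        have "(j,k,r) \<in> Idx" unfolding Idx_def using that by simp
        then show ?thesis using nU unfolding U_def by blast
      qed
      have B0: "B (j,k,0) = {W\<in>space P. t1/2 \<le> (\<Sum>i<n. c j i * W (i,k))}" for j k
        unfolding B_def by simp
      have B1: "B (j,k,1) = {W\<in>space P. t1/2 \<le> (\<Sum>i<n. (- c j i) * W (i,k))}" for j k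
        unfolding B_def by simp
      have B2: "B (j,k,2) = {W\<in>space P. real n * t2 \<le> 1 * Qf n \<delta> j k W}" for j k
        unfolding B_def by simp
      have B3: "B (j,k,3) = {W\<in>space P. real n * t2 \<le> (-1) * Qf n \<delta> j k W}" for j k
        unfolding B_def by simp
      have A: "\<bar>\<Sum>i<n. c j i * W (i,k)\<bar> \<le> t1/2" if "j < p" "k < p" for j k
      proof -
        have "\<not> t1/2 \<le> (\<Sum>i<n. c j i * W (i,k))" using notB[OF that(1) that(2), of 0] Wsp unfolding B0 by simp
        moreover have "\<not> t1/2 \<le> (\<Sum>i<n. (- c j i) * W (i,k))" using notB[OF that(1) that(2), of 1] Wsp unfolding B1 by simp
        moreover have "(\<Sum>i<n. (- c j i) * W (i,k)) = - (\<Sum>i<n. c j i * W (i,k))" by (simp add: sum_negf)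
        ultimately show ?thesis by linarith
      qed
      have Qb: "\<bar>Qf n \<delta> j k W\<bar> \<le> real n * t2" if "j < p" "k < p" for j k
      proof -
        have "\<not> real n * t2 \<le> 1 * Qf n \<delta> j k W" using notB[OF that(1) that(2), of 2] Wsp unfolding B2 by simp
        moreover have "\<not> real n * t2 \<le> (-1) * Qf n \<delta> j k W" using notB[OF that(1) that(2), of 3] Wsp unfolding B3 by simp
        ultimately show ?thesis by linarith
      qed
      define \<Delta> where "\<Delta> j k = noisy_gram n \<delta> X W j k - gram n X j k" for j k
      have Db: "\<bar>\<Delta> j k\<bar> \<le> t1 + t2" if "j < p" "k < p" for j k
      proof -
        have "\<Delta> j k = (\<Sum>i<n. c j i * W (i,k)) + (\<Sum>i<n. c k i * W (i,j)) + Qf n \<delta> j k W / real n"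
          unfolding \<Delta>_def c_def by (rule NG_split[OF n1])
        moreover have "\<bar>Qf n \<delta> j k W / real n\<bar> \<le> t2"
        proof -
          have "\<bar>Qf n \<delta> j k W / real n\<bar> = \<bar>Qf n \<delta> j k W\<bar> / real n" by (simp add: abs_divide)
          also have "\<dots> \<le> real n * t2 / real n" by (rule divide_right_mono[OF Qb[OF that]]) simp
          also have "\<dots> = t2" using n1 by simp
          finally show ?thesis .
        qed
        ultimately show ?thesis using A[OF that] A[OF that(2,1)] by linarith
      qed
      have inf: "inf_norm {..<p} {..<p} \<Delta> \<le> \<epsilon>0"
      proof -
        have "inf_norm {..<p} {..<p} \<Delta> = Max ((\<lambda>j. \<Sum>k<p. \<bar>\<Delta> j k\<bar>) ` {..<p})"
        proof -
          have "0 \<in> {..<p}" using p1 by simp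
          then have ne: "{..<p} \<noteq> {}" by blast
          show ?thesis by (simp only: inf_norm_def ne if_False)
        qed
        also have "\<dots> \<le> real p * (t1 + t2)"
        proof (subst Max_le_iff)
          show "finite ((\<lambda>j. \<Sum>k<p. \<bar>\<Delta> j k\<bar>) ` {..<p})" by simp
          show "(\<lambda>j. \<Sum>k<p. \<bar>\<Delta> j k\<bar>) ` {..<p} \<noteq> {}" using ne_p by blast
          show "\<forall>a\<in>(\<lambda>j. \<Sum>k<p. \<bar>\<Delta> j k\<bar>) ` {..<p}. a \<le> real p * (t1 + t2)"
          proof
            fix a assume "a \<in> (\<lambda>j. \<Sum>k<p. \<bar>\<Delta> j k\<bar>) ` {..<p}"
            then obtain j where j: "j < p" "a = (\<Sum>k<p. \<bar>\<Delta> j k\<bar>)" by auto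
            have "(\<Sum>k<p. \<bar>\<Delta> j k\<bar>) \<le> (\<Sum>k<p. t1 + t2)" by (rule sum_mono) (use Db j in auto)
            then show "a \<le> real p * (t1 + t2)" using j by simp
          qed
        qed
        also have "\<dots> \<le> \<epsilon>0" by (rule eps')
        finally show ?thesis .
      qed
      have AE: "(\<lambda>j k. gram n X j k + \<Delta> j k) = noisy_gram n \<delta> X W"
        unfolding \<Delta>_def by (intro ext) simp
      have "sub_invertible S (\<lambda>j k. gram n X j k + \<Delta> j k) \<and> irrep p S (\<lambda>j k. gram n X j k + \<Delta> j k) \<le> 1 - \<eta> / 2"
        using hyp inf by blast
      then have "sub_invertible S (noisy_gram n \<delta> X W) \<and> irrep p S (noisy_gram n \<delta> X W) \<le> 1 - \<eta> / 2"
        unfolding AE .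
      then have "W \<in> T" unfolding T_def using Wsp by simp
      then show False using W by simp
    qed
  qed
  have "prob (space P - T) \<le> prob U" by (rule finite_measure_mono[OF sub Usets])
  then have "1 - \<alpha> \<le> prob T" using prob_compl[OF Tsets] U_b by linarith
  then show ?thesis unfolding PN T_def .
qed


theorem theorem1:
  shows "\<exists>C_t > 0. \<forall>(n::nat) (p::nat) (X :: nat \<Rightarrow> nat \<Rightarrow> real) (M::real) (\<delta>::real)
            (S :: nat set) (\<eta>::real) (\<epsilon>\<^sub>0::real) (\<alpha>::real).
     n \<ge> 1 \<longrightarrow> M > 0 \<longrightarrow>
     (\<forall>j<p. (1 / real n) * (\<Sum>i<n. (X i j)\<^sup>2) \<le> M\<^sup>2) \<longrightarrow>
     \<delta> > 0 \<longrightarrow>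
     S \<noteq> {} \<longrightarrow> S \<subset> {..<p} \<longrightarrow>
     sub_invertible S (gram n X) \<longrightarrow>
     0 < \<eta> \<longrightarrow> \<eta> < 1 \<longrightarrow>
     irrep p S (gram n X) \<le> 1 - \<eta> \<longrightarrow>
     \<epsilon>\<^sub>0 > 0 \<longrightarrow>
     (\<forall>\<Delta> :: nat \<Rightarrow> nat \<Rightarrow> real. inf_norm {..<p} {..<p} \<Delta> \<le> \<epsilon>\<^sub>0 \<longrightarrow>
        (let A = (\<lambda>j k. gram n X j k + \<Delta> j k) in
           sub_invertible S A \<and> irrep p S A \<le> 1 - \<eta> / 2)) \<longrightarrow>
     0 < \<alpha> \<longrightarrow> \<alpha> < 1 \<longrightarrow>
     (let L = ln (4 * (real p)\<^sup>2 / \<alpha>);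
          t\<^sub>1 = 2 * M * sqrt (2 * \<delta>\<^sup>2 * L / real n);
          t\<^sub>2 = C_t * \<delta>\<^sup>2 * (sqrt (L / real n) + L / real n);
          \<epsilon> = real p * (t\<^sub>1 + t\<^sub>2)
      in \<epsilon> \<le> \<epsilon>\<^sub>0 \<longrightarrow>
         measure (noise_measure n p \<delta>)
           {W \<in> space (noise_measure n p \<delta>).
              sub_invertible S (noisy_gram n \<delta> X W) \<and>
              irrep p S (noisy_gram n \<delta> X W) \<le> 1 - \<eta> / 2} \<ge> 1 - \<alpha>)"
    apply (rule exI[of _ "20::real"])
  apply (intro conjI allI impI)
   apply simp
  apply (unfold Let_def)
  apply (intro impI)
  apply (rule main)
           apply assumption+
  done

end
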